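(* Let $X,M\ge 1$, $\delta>0$, let $\mathcal{M}$ be a set of at most $T$ integer points $(l,m)$ with $M\le m<2M$, let $\lambda_{lm}$ be real numbers for $(l,m)\in\mathcal{M}$, and let $\{a_n\}$ be a sequence of complex numbers. Then $$\sum_{(l,m)\in\mathcal{M}}\max_{N\le X}\Big|\sum_{mn\le N}a_n e(\lambda_{lm}n)\Big|^2\ll D_\delta\log^3(2TX)\left(\frac{X}{M}+\delta^{-1}\right)\sum_{n\le X/M}|a_n|^2,$$ where $$D_\delta=\max_{(l,m)\in\mathcal{M}}\#\{(l',m')\in\mathcal{M}:\|\lambda_{lm}-\lambda_{l'm'}\|<\delta\}.$$
   Context: $e(x):=\exp(2\pi i x)$; $\|x\|$ denotes the distance from $x$ to the nearest integer. The inner sums run over positive integers $n$. The implied constant is absolute. *)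

theory Defs
  imports "HOL-Analysis.Analysis"
begin

definition e :: "real \<Rightarrow> complex" where
  "e x = exp (2 * pi * \<i> * complex_of_real x)"

definition dist_nint :: "real \<Rightarrow> real" where
  "dist_nint x = \<bar>x - of_int (round x)\<bar>"

definition psum :: "(nat \<Rightarrow> complex) \<Rightarrow> real \<Rightarrow> int \<Rightarrow> real \<Rightarrow> complex" where
  "psum a lam m N = (\<Sum>n\<in>{n::nat. 1 \<le> n \<and> real_of_int m * real n \<le> N}. a n * e (lam * real n))"

text \<open>max over N \<le> X of |psum|^2; the sum only depends on floor N, and is 0 for N < 1,
  so the maximum is taken over integers 0 \<le> N \<le> X.\<close>
definition maxpsum :: "(nat \<Rightarrow> complex) \<Rightarrow> real \<Rightarrow> int \<Rightarrow> real \<Rightarrow> real" where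
  "maxpsum a lam m X = Max ((\<lambda>N::nat. (cmod (psum a lam m (real N)))^2) ` {N. real N \<le> X})"

text \<open>D_delta; taken to be 0 for the empty set.\<close>
definition Ddelta :: "(int \<times> int) set \<Rightarrow> (int \<times> int \<Rightarrow> real) \<Rightarrow> real \<Rightarrow> nat" where
  "Ddelta S lam \<delta> = Max (insert 0 ((\<lambda>p. card {q \<in> S. dist_nint (lam p - lam q) < \<delta>}) ` S))"

end

theory Submission
  imports Defs
begin


lemma e_cis: "e x = cis (2*pi*x)"
  unfolding e_def cis_conv_exp by (simp add: mult_ac)

lemma e_add: "e (x + y) = e x * e y"
  by (simp add: e_cis cis_mult distrib_left)

lemma e_cnj: "cnj (e x) = e (- x)"
  by (simp add: e_cis cis_cnj)

lemma e_int: "e (of_int k) = 1"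
  by (simp add: e_cis)

lemma norm_e [simp]: "norm (e x) = 1"
  by (simp add: e_cis)

lemma e_pow: "e (x * real n) = e x ^ n"
proof -
  have "e (x*real n) = cis (real n * (2*pi*x))" by (simp add: e_cis mult_ac)
  also have "\<dots> = e x ^ n" by (simp only: e_cis Complex.DeMoivre)
  finally show ?thesis .
qed

lemma dist_nint_le: "dist_nint x \<le> \<bar>x - of_int k\<bar>"
proof -
  have h: "\<bar>x - of_int (round x)\<bar> \<le> 1/2" using of_int_round_abs_le[of x] by (simp add: abs_minus_commute)
  show ?thesis
  proof (cases "k = round x")
    case True thus ?thesis by (simp add: dist_nint_def)
  next
    case False
    hence "\<bar>k - round x\<bar> \<ge> 1" by simp
    hence "\<bar>real_of_int k - of_int (round x)\<bar> \<ge> 1"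
      by (metis of_int_abs of_int_diff of_int_le_iff of_int_1)
    thus ?thesis using h unfolding dist_nint_def by arith
  qed
qed

lemma sin_lower: assumes "0 \<le> d" "d \<le> 1/2" shows "d \<le> sin (pi * d)"
proof -
  have b: "\<bar>sin (pi*d) - (\<Sum>m<3. sin_coeff m * (pi*d) ^ m)\<bar> \<le> inverse (fact 3) * \<bar>pi*d\<bar> ^ 3"
    by (rule Maclaurin_sin_bound)
  have s: "(\<Sum>m<3. sin_coeff m * (pi*d) ^ m) = pi * d"
    by (simp add: eval_nat_numeral sin_coeff_def)
  have "\<bar>pi*d\<bar> = pi*d" using assms by simp
  hence "\<bar>sin (pi*d) - pi*d\<bar> \<le> (pi*d)^3/6" using b unfolding s by (simp add: fact_numeral divide_simps)
  hence "pi*d - (pi*d)^3/6 \<le> sin (pi*d)" by linarith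
  moreover have "d \<le> pi*d - (pi*d)^3/6"
  proof -
    have p1: "pi*pi \<le> 4*4" using pi_less_4 pi_gt_zero by (intro mult_mono) auto
    have p2: "d*d \<le> (1/2)*(1/2)" using assms by (intro mult_mono) auto
    have "pi^2 * d^2 \<le> 16 * (1/4)"
      using mult_mono[OF p1 p2] by (simp add: power2_eq_square mult_ac)
    hence q: "pi^2 * d^2 \<le> 4" by simp
    have "(pi*d)^3 = (pi*d) * (pi^2 * d^2)" by (simp add: eval_nat_numeral mult_ac)
    also have "\<dots> \<le> (pi*d) * 4" using q assms pi_gt_zero by (intro mult_left_mono) auto
    finally have "(pi*d)^3/6 \<le> pi*d * (2/3)" by simp
    moreover have "d * 3 \<le> pi * d" using mult_right_mono[of 3 pi d] pi_gt3 assms by simp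
    ultimately show ?thesis by linarith
  qed
  ultimately show ?thesis by linarith
qed



lemma norm_1_minus_cis: "cmod (1 - cis (2*z)) = 2 * \<bar>sin z\<bar>"
proof -
  have eq: "1 - cis (2*z) = Complex (2 * sin z ^ 2) (- (2 * sin z * cos z))"
    by (simp add: complex_eq_iff cos_double_sin sin_double)
  have "(2 * sin z ^ 2)^2 + (- (2 * sin z * cos z))^2 = (2 * sin z)^2 * (sin z ^ 2 + cos z ^ 2)"
    by algebra
  also have "\<dots> = (2 * sin z)^2" by simp
  finally have c: "(2 * sin z ^ 2)^2 + (- (2 * sin z * cos z))^2 = (2 * sin z)^2" .
  have "cmod (1 - cis (2*z)) = sqrt ((2 * sin z)^2)" by (simp only: eq complex_norm c)
  also have "\<dots> = 2 * \<bar>sin z\<bar>" by (simp only: real_sqrt_abs abs_mult abs_numeral)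
  finally show ?thesis .
qed

lemma geom_sum: "(1 - w) * (\<Sum>n\<in>{1..k}. w ^ n) = w - w ^ Suc k" for w :: complex
proof (induction k)
  case 0 then show ?case by simp
next
  case (Suc k)
  have "(\<Sum>n\<in>{1..Suc k}. w ^ n) = (\<Sum>n\<in>{1..k}. w ^ n) + w ^ Suc k" by simp
  moreover have "(1-w)*w^Suc k = w^Suc k - w^Suc (Suc k)" by (simp add: algebra_simps)
  ultimately show ?case using Suc by (simp add: distrib_left)
qed

lemma dist_nint_eq: "dist_nint x = \<bar>x - of_int (round x)\<bar>" by (simp add: dist_nint_def)

lemma dist_nint_half: "dist_nint x \<le> 1/2"
  unfolding dist_nint_def using of_int_round_abs_le[of x] by (simp add: abs_minus_commute)

lemma geom_bound:
  assumes d: "dist_nint \<theta> > 0"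
  shows "cmod (\<Sum>n\<in>{1..k}. e (\<theta> * real n)) \<le> 1 / dist_nint \<theta>"
proof -
  define t where "t = \<theta> - of_int (round \<theta>)"
  define w where "w = e \<theta>"
  have dt: "dist_nint \<theta> = \<bar>t\<bar>" by (simp add: dist_nint_def t_def)
  have "w = e t" unfolding w_def t_def using e_add[of "\<theta> - of_int (round \<theta>)" "of_int (round \<theta>)"]
    by (simp add: e_int)
  hence "cmod (1 - w) = 2 * \<bar>sin (pi * t)\<bar>"
    using norm_1_minus_cis[of "pi*t"] by (simp add: e_cis mult_ac)
  also have "\<bar>sin (pi * t)\<bar> = sin (pi * \<bar>t\<bar>)"
  proof -
    have h: "\<bar>t\<bar> \<le> 1/2" using dist_nint_half[of \<theta>] dt by simp
    have s0: "0 \<le> sin (pi * \<bar>t\<bar>)" by (rule sin_ge_zero) (use h in auto)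
    show ?thesis
    proof (cases "t \<ge> 0")
      case True then show ?thesis using s0 by simp
    next
      case False
      hence "sin (pi * \<bar>t\<bar>) = - sin (pi * t)" by (simp add: sin_minus)
      then show ?thesis using s0 by simp
    qed
  qed
  finally have w1: "cmod (1 - w) \<ge> 2 * \<bar>t\<bar>"
    using sin_lower[of "\<bar>t\<bar>"] dist_nint_half[of \<theta>] dt by simp
  have tpos: "\<bar>t\<bar> > 0" using d dt by simp
  have sumeq: "(\<Sum>n\<in>{1..k}. e (\<theta> * real n)) = (\<Sum>n\<in>{1..k}. w ^ n)"
    by (simp add: w_def e_pow)
  have "cmod ((1 - w) * (\<Sum>n\<in>{1..k}. w ^ n)) \<le> 2"
    unfolding geom_sum using norm_triangle_ineq4[of w "w ^ Suc k"] by (simp add: w_def norm_power norm_mult)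
  hence "cmod (1 - w) * cmod (\<Sum>n\<in>{1..k}. w ^ n) \<le> 2" by (simp add: norm_mult)
  hence "2 * \<bar>t\<bar> * cmod (\<Sum>n\<in>{1..k}. w ^ n) \<le> 2"
    by (meson w1 mult_right_mono norm_ge_zero order_trans)
  thus ?thesis using tpos unfolding sumeq dt by (simp add: field_simps)
qed



lemma large_sieve_abstract:
  fixes P :: "'p set" and A :: "nat set" and x :: "'p \<Rightarrow> nat \<Rightarrow> complex" and a :: "nat \<Rightarrow> complex"
  assumes fP: "finite P" and fA: "finite A" and B0: "B \<ge> 0"
  and bnd: "\<And>p. p\<in>P \<Longrightarrow> (\<Sum>q\<in>P. cmod (\<Sum>n\<in>A. x p n * cnj (x q n))) \<le> B"
  shows "(\<Sum>p\<in>P. (cmod (\<Sum>n\<in>A. a n * x p n))^2) \<le> B * (\<Sum>n\<in>A. (cmod (a n))^2)"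
proof -
  define S where "S p = (\<Sum>n\<in>A. a n * x p n)" for p
  define W where "W = (\<Sum>p\<in>P. (cmod (S p))^2)"
  define z where "z n = (\<Sum>p\<in>P. cnj (S p) * x p n)" for n
  define G where "G p q = (\<Sum>n\<in>A. x p n * cnj (x q n))" for p q
  have W0: "W \<ge> 0" unfolding W_def by (simp add: sum_nonneg)
  have "complex_of_real W = (\<Sum>p\<in>P. cnj (S p) * S p)"
    unfolding W_def of_real_sum by (intro sum.cong refl) (metis complex_norm_square mult.commute)
  also have "\<dots> = (\<Sum>p\<in>P. \<Sum>n\<in>A. a n * (cnj (S p) * x p n))"
    unfolding S_def[of p for p] sum_distrib_left by (intro sum.cong refl) (simp add: mult_ac)
  also have "\<dots> = (\<Sum>n\<in>A. a n * z n)"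
    unfolding z_def sum_distrib_left by (rule sum.swap)
  finally have 1: "complex_of_real W = (\<Sum>n\<in>A. a n * z n)" .
  have 2: "W \<le> (\<Sum>n\<in>A. cmod (a n) * cmod (z n))"
  proof -
    have "W = cmod (complex_of_real W)" using W0 by simp
    also have "\<dots> \<le> (\<Sum>n\<in>A. cmod (a n * z n))" unfolding 1 by (rule norm_sum)
    finally show ?thesis by (simp add: norm_mult)
  qed
  have 3: "(\<Sum>n\<in>A. cmod (a n) * cmod (z n))^2 \<le> (\<Sum>n\<in>A. (cmod (a n))^2) * (\<Sum>n\<in>A. (cmod (z n))^2)"
    by (rule Cauchy_Schwarz_ineq_sum)
  have Gsym: "cmod (G p q) = cmod (G q p)" for p q
  proof -
    have "G p q = cnj (G q p)" unfolding G_def by (simp add: mult.commute)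
    thus ?thesis by simp
  qed
  have 4: "(\<Sum>n\<in>A. (cmod (z n))^2) \<le> B * W"
  proof -
    have "complex_of_real (\<Sum>n\<in>A. (cmod (z n))^2) = (\<Sum>n\<in>A. z n * cnj (z n))"
      unfolding of_real_sum by (intro sum.cong refl) (metis complex_norm_square)
    also have "\<dots> = (\<Sum>n\<in>A. \<Sum>p\<in>P. \<Sum>q\<in>P. cnj (S p) * S q * (x p n * cnj (x q n)))"
      unfolding z_def cnj_sum sum_product
      by (intro sum.cong refl) (simp add: mult_ac)
    also have "\<dots> = (\<Sum>p\<in>P. \<Sum>q\<in>P. cnj (S p) * S q * G p q)"
      unfolding G_def sum_distrib_left
      by (subst sum.swap) (intro sum.cong refl, rule sum.swap)
    finally have eq: "complex_of_real (\<Sum>n\<in>A. (cmod (z n))^2) = (\<Sum>p\<in>P. \<Sum>q\<in>P. cnj (S p) * S q * G p q)" .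
    have "(\<Sum>n\<in>A. (cmod (z n))^2) = cmod (complex_of_real (\<Sum>n\<in>A. (cmod (z n))^2))"
      by (simp only: norm_of_real abs_of_nonneg[OF sum_nonneg] zero_le_power2)
    also have "\<dots> \<le> (\<Sum>p\<in>P. \<Sum>q\<in>P. cmod (S p) * cmod (S q) * cmod (G p q))"
      unfolding eq
      by (rule order_trans[OF norm_sum sum_mono], rule order_trans[OF norm_sum], simp add: norm_mult)
    also have "\<dots> \<le> (\<Sum>p\<in>P. \<Sum>q\<in>P. ((cmod (S p))^2/2 * cmod (G p q) + (cmod (S q))^2/2 * cmod (G q p)))"
    proof (intro sum_mono)
      fix p q
      have "cmod (S p) * cmod (S q) \<le> (cmod (S p))^2/2 + (cmod (S q))^2/2"
        using sum_squares_bound[of "cmod (S p)" "cmod (S q)"] by (simp add: power2_eq_square field_simps)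
      hence "cmod (S p) * cmod (S q) * cmod (G p q) \<le> ((cmod (S p))^2/2 + (cmod (S q))^2/2) * cmod (G p q)"
        by (rule mult_right_mono) simp
      thus "cmod (S p) * cmod (S q) * cmod (G p q) \<le> (cmod (S p))^2/2 * cmod (G p q) + (cmod (S q))^2/2 * cmod (G q p)"
        using Gsym[of p q] by (simp add: distrib_right)
    qed
    also have "\<dots> = (\<Sum>p\<in>P. (cmod (S p))^2 * (\<Sum>q\<in>P. cmod (G p q)))"
    proof -
      have sw: "(\<Sum>p\<in>P. \<Sum>q\<in>P. (cmod (S q))^2/2 * cmod (G q p)) = (\<Sum>p\<in>P. \<Sum>q\<in>P. (cmod (S p))^2/2 * cmod (G p q))"
        by (rule sum.swap)
      have "(\<Sum>p\<in>P. \<Sum>q\<in>P. ((cmod (S p))^2/2 * cmod (G p q) + (cmod (S q))^2/2 * cmod (G q p)))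
         = (\<Sum>p\<in>P. \<Sum>q\<in>P. (cmod (S p))^2/2 * cmod (G p q)) + (\<Sum>p\<in>P. \<Sum>q\<in>P. (cmod (S q))^2/2 * cmod (G q p))"
        by (simp only: sum.distrib)
      also have "\<dots> = 2 * (\<Sum>p\<in>P. \<Sum>q\<in>P. (cmod (S p))^2/2 * cmod (G p q))" unfolding sw by simp
      also have "\<dots> = (\<Sum>p\<in>P. (cmod (S p))^2 * (\<Sum>q\<in>P. cmod (G p q)))"
        by (simp add: sum_distrib_left)
      finally show ?thesis .
    qed
    also have "\<dots> \<le> (\<Sum>p\<in>P. (cmod (S p))^2 * B)"
      by (intro sum_mono mult_left_mono) (auto simp: bnd[unfolded G_def[symmetric]])
    also have "\<dots> = B * W" unfolding W_def by (simp add: sum_distrib_left mult.commute)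
    finally show ?thesis .
  qed
  let ?Q = "(\<Sum>n\<in>A. (cmod (a n))^2)"
  have Q0: "?Q \<ge> 0" by (simp add: sum_nonneg)
  have "W^2 \<le> ?Q * (B * W)"
  proof -
    have "W^2 \<le> (\<Sum>n\<in>A. cmod (a n) * cmod (z n))^2" using 2 W0 by (simp add: power_mono)
    also have "\<dots> \<le> ?Q * (\<Sum>n\<in>A. (cmod (z n))^2)" by (rule 3)
    also have "\<dots> \<le> ?Q * (B * W)" using 4 Q0 by (rule mult_left_mono)
    finally show ?thesis .
  qed
  hence "W \<le> B * ?Q"
  proof (cases "W = 0")
    case True thus ?thesis using B0 Q0 by simp
  next
    case False
    hence "W > 0" using W0 by simp
    moreover assume "W^2 \<le> ?Q * (B * W)"
    ultimately show ?thesis by (simp add: power2_eq_square mult_ac)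
  qed
  thus ?thesis unfolding W_def S_def .
qed



definition H :: "nat \<Rightarrow> real" where "H n = (\<Sum>j\<in>{1..n}. 1 / real j)"

lemma H_mono: "m \<le> n \<Longrightarrow> H m \<le> H n"
  unfolding H_def by (intro sum_mono2) auto

lemma H_nonneg: "H n \<ge> 0" unfolding H_def by (simp add: sum_nonneg)

lemma H_Suc: "H (Suc n) = H n + 1 / real (Suc n)"
  unfolding H_def by simp

lemma harm_set:
  assumes "finite J" "\<forall>j\<in>J. j \<ge> 1"
  shows "(\<Sum>j\<in>J. 1 / real j) \<le> H (card J)"
  using assms
proof (induction "card J" arbitrary: J)
  case 0 then show ?case by (simp add: H_def)
next
  case (Suc n)
  hence ne: "J \<noteq> {}" by auto
  define m where "m = Max J"
  have mJ: "m \<in> J" using Suc ne m_def by simp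
  have sub: "J \<subseteq> {1..m}" using Suc m_def by auto
  hence "card J \<le> m" using card_mono[OF _ sub] by simp
  hence mge: "real (Suc n) \<le> real m" using Suc by simp
  have cJ': "n = card (J - {m})" using Suc mJ by simp
  have IH0: "(\<Sum>j\<in>J - {m}. 1 / real j) \<le> H (card (J - {m}))"
    using Suc.hyps(1)[OF cJ'] Suc.prems by auto
  hence IH: "(\<Sum>j\<in>J - {m}. 1 / real j) \<le> H n" using cJ' by simp
  have "(\<Sum>j\<in>J. 1 / real j) = 1 / real m + (\<Sum>j\<in>J - {m}. 1 / real j)"
    using sum.remove[OF Suc.prems(1) mJ] by simp
  also have "\<dots> \<le> 1 / real (Suc n) + H n"
    using IH mge by (intro add_mono) (auto simp: divide_simps)
  finally show ?case using Suc.hyps(2)[symmetric] by (simp add: H_Suc)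
qed

lemma H_ln: "n \<ge> 1 \<Longrightarrow> H n \<le> 1 + ln (real n)"
proof (induction n rule: dec_induct)
  case base then show ?case by (simp add: H_def)
next
  case (step n)
  have n0: "real n > 0" using step by simp
  have "ln (real n / real (Suc n)) \<le> real n / real (Suc n) - 1"
    by (rule ln_le_minus_one) (use n0 in simp)
  hence "ln (real n) - ln (real (Suc n)) \<le> - 1 / real (Suc n)"
    using n0 by (simp add: ln_divide_pos field_simps)
  thus ?case using step by (simp add: H_Suc)
qed



lemma dist_nint_minus: "dist_nint (- x) = dist_nint x"
proof -
  have "dist_nint (- x) \<le> dist_nint x"
    using dist_nint_le[of "-x" "- round x"] by (simp add: dist_nint_def abs_minus_commute)
  moreover have "dist_nint x \<le> dist_nint (- x)"
    using dist_nint_le[of "x" "- round (-x)"] by (simp add: dist_nint_def abs_minus_commute)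
  ultimately show ?thesis by simp
qed

lemma dist_nint_shift: "dist_nint (x + of_int k) = dist_nint x"
proof -
  have "dist_nint (x + of_int k) \<le> dist_nint x"
    using dist_nint_le[of "x + of_int k" "round x + k"] by (simp add: dist_nint_def)
  moreover have "dist_nint x \<le> dist_nint (x + of_int k)"
    using dist_nint_le[of "x" "round (x + of_int k) - k"] by (simp add: dist_nint_def algebra_simps)
  ultimately show ?thesis by simp
qed

lemma sum_inv_int:
  assumes "finite I" "\<forall>i\<in>I. i > (0::int)"
  shows "(\<Sum>i\<in>I. 1 / real_of_int i) \<le> H (card I)"
proof -
  have inj: "inj_on nat I" using assms by (auto simp: inj_on_def)
  have "(\<Sum>i\<in>I. 1 / real_of_int i) = (\<Sum>j\<in>nat ` I. 1 / real j)"
    using assms by (subst sum.reindex[OF inj]) (auto intro!: sum.cong simp: of_nat_nat)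
  also have "\<dots> \<le> H (card (nat ` I))"
    using assms by (intro harm_set) auto
  finally show ?thesis using card_image[OF inj] by simp
qed

lemma far_sum:
  fixes S :: "'p set" and lam :: "'p \<Rightarrow> real"
  assumes fS: "finite S" and d0: "\<delta> > 0"
    and Dbd: "\<And>q. q \<in> S \<Longrightarrow> real (card {q'\<in>S. dist_nint (lam q - lam q') < \<delta>}) \<le> D"
  shows "(\<Sum>q\<in>{q\<in>S. dist_nint (lam p - lam q) \<ge> \<delta>}. 1 / dist_nint (lam p - lam q))
           \<le> 4 * D / \<delta> * H (card S)"
proof -
  define F where "F = {q\<in>S. dist_nint (lam p - lam q) \<ge> \<delta>}"
  define r where "r q = (lam q - lam p) - of_int (round (lam q - lam p))" for q
  define i where "i q = \<lfloor>r q / \<delta>\<rfloor>" for q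
  have fF: "finite F" using fS F_def by simp
  have dr: "dist_nint (lam p - lam q) = \<bar>r q\<bar>" for q
    using dist_nint_minus[of "lam q - lam p"] by (simp add: dist_nint_def r_def)
  have ri1: "of_int (i q) * \<delta> \<le> r q" "r q < (of_int (i q) + 1) * \<delta>" for q
  proof -
    have "of_int (i q) \<le> r q / \<delta>" "r q / \<delta> < of_int (i q) + 1" unfolding i_def by linarith+
    thus "of_int (i q) * \<delta> \<le> r q" "r q < (of_int (i q) + 1) * \<delta>" using d0 by (simp_all add: field_simps)
  qed
  have key: "1 / \<bar>r q\<bar> \<le> 2 / \<delta> * (1 / \<bar>real_of_int (i q)\<bar>)" and inz: "i q \<noteq> 0" if "q \<in> F" for q
  proof -
    have rd: "\<bar>r q\<bar> \<ge> \<delta>" using that dr F_def by auto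
    have "\<bar>real_of_int (i q)\<bar> * \<delta> \<le> 2 * \<bar>r q\<bar> \<and> i q \<noteq> 0"
    proof (cases "i q \<ge> 1")
      case True
      hence "of_int (i q) * \<delta> \<le> r q" using ri1 by simp
      moreover have "real_of_int (i q) \<ge> 1" using True by simp
      ultimately show ?thesis using True d0 by auto
    next
      case False
      hence "i q \<le> 0" by simp
      show ?thesis
      proof (cases "i q = 0")
        case True thus ?thesis using ri1(1)[of q] ri1(2)[of q] rd by simp
      next
        case False
        hence ile: "real_of_int (i q) \<le> -1" using \<open>i q \<le> 0\<close> by simp
        have "r q < (of_int (i q) + 1) * \<delta>" by (rule ri1)
        have e1: "(- of_int (i q) - 1) * \<delta> = - ((of_int (i q) + 1) * \<delta>)" by (simp add: algebra_simps)
        have e2: "(- of_int (i q) - 1) * \<delta> = - (of_int (i q) * \<delta>) - \<delta>" by (simp add: algebra_simps)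
        have e3: "\<bar>real_of_int (i q)\<bar> * \<delta> = - (of_int (i q) * \<delta>)" using ile by simp
        have "r q < 0"
        proof -
          have "(of_int (i q) + 1) * \<delta> \<le> 0" by (rule mult_nonpos_nonneg) (use ile d0 in auto)
          thus ?thesis using ri1(2)[of q] by linarith
        qed
        hence "\<bar>r q\<bar> = - r q" by simp
        moreover have e4: "(of_int (i q) + 1) * \<delta> = of_int (i q) * \<delta> + \<delta>" by (simp add: distrib_right)
        moreover have "r q < (of_int (i q) + 1) * \<delta>" by (rule ri1(2))
        ultimately have "\<bar>real_of_int (i q)\<bar> * \<delta> \<le> \<bar>r q\<bar> + \<delta>" unfolding e3 by linarith
        thus ?thesis using rd False by (intro conjI) (linarith, simp)
      qed
    qed
    hence a: "\<bar>real_of_int (i q)\<bar> * \<delta> \<le> 2 * \<bar>r q\<bar>" and "i q \<noteq> 0" by auto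
    thus "i q \<noteq> 0" by simp
    have ip: "\<bar>real_of_int (i q)\<bar> > 0" using \<open>i q \<noteq> 0\<close> by simp
    have rp: "\<bar>r q\<bar> > 0" using rd d0 by simp
    show "1 / \<bar>r q\<bar> \<le> 2 / \<delta> * (1 / \<bar>real_of_int (i q)\<bar>)"
      using a ip rp d0 by (simp add: field_simps)
  qed
  have cardbd: "real (card {q\<in>F. i q = j}) \<le> D" if jF: "j \<in> i ` F" for j
  proof (cases "{q\<in>F. i q = j} = {}")
    case True thus ?thesis using jF by auto
  next
    case False
    then obtain q0 where q0: "q0 \<in> F" "i q0 = j" by auto
    have "{q\<in>F. i q = j} \<subseteq> {q'\<in>S. dist_nint (lam q0 - lam q') < \<delta>}"
    proof
      fix q assume q: "q \<in> {q\<in>F. i q = j}"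
      have "\<bar>r q0 - r q\<bar> < \<delta>" using ri1[of q] ri1[of q0] q q0 by (auto simp: algebra_simps)
      moreover have eq: "lam q0 - lam q = (r q0 - r q) + of_int (round (lam q0 - lam p) - round (lam q - lam p))"
        unfolding r_def by simp
      have "dist_nint (lam q0 - lam q) = dist_nint (r q0 - r q)" by (simp only: eq dist_nint_shift)
      ultimately have "dist_nint (lam q0 - lam q) < \<delta>"
        using dist_nint_le[of "r q0 - r q" 0] by simp
      thus "q \<in> {q'\<in>S. dist_nint (lam q0 - lam q') < \<delta>}" using q F_def by simp
    qed
    hence "card {q\<in>F. i q = j} \<le> card {q'\<in>S. dist_nint (lam q0 - lam q') < \<delta>}"
      using fS by (intro card_mono) auto
    thus ?thesis using Dbd[of q0] q0 F_def by simp
  qed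
  have D0: "D \<ge> 0" if ne: "S \<noteq> {}"
  proof -
    obtain q where "q \<in> S" using ne by auto
    from Dbd[OF this] show ?thesis by (meson of_nat_0_le_iff order_trans)
  qed
  have "(\<Sum>q\<in>F. 1 / dist_nint (lam p - lam q)) = (\<Sum>q\<in>F. 1 / \<bar>r q\<bar>)" by (simp add: dr)
  also have "\<dots> \<le> (\<Sum>q\<in>F. 2 / \<delta> * (1 / \<bar>real_of_int (i q)\<bar>))"
    by (intro sum_mono key)
  also have "\<dots> = (\<Sum>j\<in>i ` F. \<Sum>q\<in>{q\<in>F. i q = j}. 2 / \<delta> * (1 / \<bar>real_of_int (i q)\<bar>))"
    by (rule sum.group[symmetric]) (use fF in auto)
  also have "\<dots> = (\<Sum>j\<in>i ` F. real (card {q\<in>F. i q = j}) * (2 / \<delta> * (1 / \<bar>real_of_int j\<bar>)))"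
    by (intro sum.cong refl) simp
  also have "\<dots> \<le> (\<Sum>j\<in>i ` F. D * (2 / \<delta> * (1 / \<bar>real_of_int j\<bar>)))"
    using d0 by (intro sum_mono mult_right_mono cardbd) auto
  also have "\<dots> = 2 * D / \<delta> * (\<Sum>j\<in>i ` F. 1 / \<bar>real_of_int j\<bar>)"
    by (simp add: sum_distrib_left mult.commute)
  finally have s1: "(\<Sum>q\<in>F. 1 / dist_nint (lam p - lam q)) \<le> 2 * D / \<delta> * (\<Sum>j\<in>i ` F. 1 / \<bar>real_of_int j\<bar>)" .
  define I where "I = i ` F"
  have fI: "finite I" using fF I_def by simp
  have I0: "0 \<notin> I" using inz I_def by auto
  have cI: "card I \<le> card S"
  proof -
    have "card I \<le> card F" unfolding I_def using fF by (rule card_image_le)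
    also have "\<dots> \<le> card S" unfolding F_def using fS by (intro card_mono) auto
    finally show ?thesis .
  qed
  have split: "(\<Sum>j\<in>I. 1 / \<bar>real_of_int j\<bar>) = (\<Sum>j\<in>{j\<in>I. j > 0}. 1 / real_of_int j)
      + (\<Sum>j\<in>uminus ` {j\<in>I. j < 0}. 1 / real_of_int j)"
  proof -
    have "I = {j\<in>I. j > 0} \<union> {j\<in>I. j < 0}" using I0 by (auto simp: linorder_not_less le_less)
    hence "(\<Sum>j\<in>I. 1 / \<bar>real_of_int j\<bar>) = (\<Sum>j\<in>{j\<in>I. j > 0} \<union> {j\<in>I. j < 0}. 1 / \<bar>real_of_int j\<bar>)"
      by (intro sum.cong) auto
    also have "\<dots> = (\<Sum>j\<in>{j\<in>I. j > 0}. 1 / \<bar>real_of_int j\<bar>) + (\<Sum>j\<in>{j\<in>I. j < 0}. 1 / \<bar>real_of_int j\<bar>)"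
      using fI by (intro sum.union_disjoint) auto
    finally have "(\<Sum>j\<in>I. 1 / \<bar>real_of_int j\<bar>) = (\<Sum>j\<in>{j\<in>I. j > 0}. 1 / \<bar>real_of_int j\<bar>) + (\<Sum>j\<in>{j\<in>I. j < 0}. 1 / \<bar>real_of_int j\<bar>)" .
    moreover have "(\<Sum>j\<in>{j\<in>I. j > 0}. 1 / \<bar>real_of_int j\<bar>) = (\<Sum>j\<in>{j\<in>I. j > 0}. 1 / real_of_int j)"
      by (intro sum.cong refl) simp
    moreover have "(\<Sum>j\<in>uminus ` {j\<in>I. j < 0}. 1 / real_of_int j) = (\<Sum>j\<in>{j\<in>I. j < 0}. 1 / \<bar>real_of_int j\<bar>)"
      by (subst sum.reindex) (auto simp: inj_on_def)
    ultimately show ?thesis by simp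
  qed
  have p1: "(\<Sum>j\<in>{j\<in>I. j > 0}. 1 / real_of_int j) \<le> H (card S)"
  proof -
    have "card {j\<in>I. j > 0} \<le> card I" using fI by (intro card_mono) auto
    hence "H (card {j\<in>I. j > 0}) \<le> H (card S)" using cI by (intro H_mono) simp
    moreover have "(\<Sum>j\<in>{j\<in>I. j > 0}. 1 / real_of_int j) \<le> H (card {j\<in>I. j > 0})"
      using fI by (intro sum_inv_int) auto
    ultimately show ?thesis by linarith
  qed
  have p2: "(\<Sum>j\<in>uminus ` {j\<in>I. j < 0}. 1 / real_of_int j) \<le> H (card S)"
  proof -
    have "card (uminus ` {j\<in>I. j < 0}) \<le> card I"
    proof -
      have "card (uminus ` {j\<in>I. j < 0}) \<le> card {j\<in>I. j < 0}" using fI by (intro card_image_le) simp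
      also have "\<dots> \<le> card I" using fI by (intro card_mono) auto
      finally show ?thesis .
    qed
    moreover have "(\<Sum>j\<in>uminus ` {j\<in>I. j < 0}. 1 / real_of_int j) \<le> H (card (uminus ` {j\<in>I. j < 0}))"
      using fI by (intro sum_inv_int) auto
    ultimately show ?thesis using cI H_mono[of "card (uminus ` {j\<in>I. j < 0})" "card S"] by linarith
  qed
  show ?thesis
  proof (cases "S = {}")
    case True thus ?thesis using F_def by (simp add: H_def)
  next
    case False
    have "(\<Sum>j\<in>i ` F. 1 / \<bar>real_of_int j\<bar>) \<le> 2 * H (card S)"
      using split p1 p2 I_def by simp
    hence "2 * D / \<delta> * (\<Sum>j\<in>i ` F. 1 / \<bar>real_of_int j\<bar>) \<le> 2 * D / \<delta> * (2 * H (card S))"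
      using D0[OF False] d0 by (intro mult_left_mono) auto
    thus ?thesis using s1 F_def by simp
  qed
qed



lemma maxpsum_attained:
  assumes "X \<ge> 0"
  shows "\<exists>N::nat. real N \<le> X \<and> maxpsum a lam m X = (cmod (psum a lam m (real N)))^2"
proof -
  let ?K = "{N::nat. real N \<le> X}"
  have fin: "finite ?K"
  proof (rule finite_subset[of _ "{..nat \<lceil>X\<rceil>}"])
    show "?K \<subseteq> {..nat \<lceil>X\<rceil>}"
    proof
      fix x assume "x \<in> ?K"
      hence "\<lceil>real x\<rceil> \<le> \<lceil>X\<rceil>" by (intro ceiling_mono) simp
      hence "int x \<le> \<lceil>X\<rceil>" by simp
      thus "x \<in> {..nat \<lceil>X\<rceil>}" by (simp add: le_nat_iff)
    qed
  qed simp
  have ne: "?K \<noteq> {}" using assms by (auto intro: exI[of _ 0])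
  have "maxpsum a lam m X \<in> (\<lambda>N::nat. (cmod (psum a lam m (real N)))^2) ` ?K"
    unfolding maxpsum_def using fin ne by (intro Max_in) auto
  thus ?thesis by auto
qed

lemma Ddelta_ge:
  assumes "finite S" "q \<in> S"
  shows "card {q'\<in>S. dist_nint (lam q - lam q') < \<delta>} \<le> Ddelta S lam \<delta>"
  unfolding Ddelta_def using assms by (intro Max_ge) auto

lemma Ddelta_empty: "Ddelta {} lam \<delta> = 0" by (simp add: Ddelta_def)

lemma initial_seg:
  assumes m0: "(m::int) > 0"
  shows "{n::nat. 1 \<le> n \<and> real_of_int m * real n \<le> N} = {1..nat \<lfloor>N / real_of_int m\<rfloor>}"
proof -
  have "real_of_int m * real n \<le> N \<longleftrightarrow> n \<le> nat \<lfloor>N / real_of_int m\<rfloor>" if n1: "1 \<le> n" for n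
  proof -
    have "real_of_int m * real n \<le> N \<longleftrightarrow> real n \<le> N / real_of_int m"
      using m0 by (simp add: field_simps)
    also have "\<dots> \<longleftrightarrow> of_int (int n) \<le> N / real_of_int m" by simp
    also have "\<dots> \<longleftrightarrow> int n \<le> \<lfloor>N / real_of_int m\<rfloor>" by (rule le_floor_iff[symmetric])
    also have "\<dots> \<longleftrightarrow> n \<le> nat \<lfloor>N / real_of_int m\<rfloor>"
    proof -
      define z where "z = \<lfloor>N / real_of_int m\<rfloor>"
      have "int n \<le> z \<longleftrightarrow> n \<le> nat z" using n1 by (cases "z \<ge> 0") (auto simp: le_nat_iff)
      thus ?thesis unfolding z_def .
    qed
    finally show ?thesis .
  qed
  thus ?thesis by auto
qed

lemma log_bound:
  fixes X T :: real
  assumes X: "X \<ge> 1" and T: "T \<ge> 1"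
  shows "1 + 4 * (1 + ln T) \<le> 56 * (ln (2 * T * X))^3"
proof -
  define L where "L = ln (2 * T * X)"
  have ln2: "ln (2::real) \<ge> 1/2"
  proof -
    have "ln (1/2::real) \<le> 1/2 - 1" by (rule ln_le_minus_one) simp
    thus ?thesis by (simp add: ln_div)
  qed
  have TX0: "T * 1 \<le> T * X" using mult_left_mono[OF X, of T] T by simp
  hence TX: "1 \<le> T * X" using T by linarith
  hence "2 \<le> 2 * T * X" by simp
  hence L2: "ln 2 \<le> L" unfolding L_def by simp
  have "T \<le> 2 * T * X" using TX0 TX by simp
  hence LT: "ln T \<le> L" unfolding L_def using T by simp
  have L0: "L \<ge> 1/2" using ln2 L2 by linarith
  have "4 * ln T \<le> 4 * L" using LT by simp
  hence "1 + 4 * (1 + ln T) \<le> 5 + 4 * L" by (simp add: algebra_simps)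
  also have "\<dots> \<le> 14 * L" using L0 by linarith
  also have "\<dots> \<le> 14 * L * (4 * L^2)"
  proof -
    have "L*L \<ge> (1/2)*(1/2)" using L0 by (intro mult_mono) auto
    hence "4 * L^2 \<ge> 1" unfolding power2_eq_square by linarith
    hence "14 * L * 1 \<le> 14 * L * (4 * L^2)" using L0 by (intro mult_left_mono) auto
    thus ?thesis by simp
  qed
  also have "\<dots> = 56 * L^3" by (simp add: eval_nat_numeral)
  finally show ?thesis unfolding L_def .
qed



lemma main_bound:
  fixes X M \<delta> T :: real and S :: "(int \<times> int) set" and lam :: "int \<times> int \<Rightarrow> real" and a :: "nat \<Rightarrow> complex"
  assumes X: "X \<ge> 1" and M: "M \<ge> 1" and d: "\<delta> > 0" and fS: "finite S" and cT: "real (card S) \<le> T"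
    and rng: "\<forall>(l,m)\<in>S. M \<le> real_of_int m \<and> real_of_int m < 2 * M"
  shows "(\<Sum>(l,m)\<in>S. maxpsum a (lam (l,m)) m X)
       \<le> 56 * real (Ddelta S lam \<delta>) * (ln (2 * T * X))^3 * (X / M + 1 / \<delta>)
           * (\<Sum>n\<in>{n::nat. 1 \<le> n \<and> real n \<le> X / M}. (cmod (a n))^2)"
proof (cases "S = {}")
  case True thus ?thesis by (simp add: Ddelta_empty)
next
  case False
  define A where "A = {n::nat. 1 \<le> n \<and> real n \<le> X / M}"
  define Q where "Q = (\<Sum>n\<in>A. (cmod (a n))^2)"
  define D where "D = real (Ddelta S lam \<delta>)"
  have M0: "M > 0" using M by simp
  have mpos: "M \<le> real_of_int (snd p)" if "p \<in> S" for p using rng that by auto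
  have mpos': "snd p > 0" if "p \<in> S" for p using mpos[OF that] M by simp
  have A_eq: "A = {1..nat \<lfloor>X / M\<rfloor>}" using initial_seg[of 1 "X/M"] unfolding A_def by simp
  have fA: "finite A" unfolding A_eq by simp
  have cardA: "real (card A) \<le> X / M"
  proof -
    have "X / M \<ge> 0" using X M0 by simp
    hence "real (nat \<lfloor>X / M\<rfloor>) = of_int \<lfloor>X / M\<rfloor>" by simp
    thus ?thesis unfolding A_eq by simp
  qed
  have XM0: "X / M \<ge> 0" using X M0 by simp
  have "\<forall>p\<in>S. \<exists>N::nat. real N \<le> X \<and> maxpsum a (lam p) (snd p) X = (cmod (psum a (lam p) (snd p) (real N)))^2"
    using maxpsum_attained X by auto
  then obtain Nf where Nf: "\<And>p. p \<in> S \<Longrightarrow> real (Nf p) \<le> X \<and> maxpsum a (lam p) (snd p) X = (cmod (psum a (lam p) (snd p) (real (Nf p))))^2"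
    using bchoice by metis
  define k where "k p = nat \<lfloor>real (Nf p) / real_of_int (snd p)\<rfloor>" for p
  define x where "x p n = (if n \<in> {1..k p} then e (lam p * real n) else 0)" for p n
  have kseg: "{n::nat. 1 \<le> n \<and> real_of_int (snd p) * real n \<le> real (Nf p)} = {1..k p}" if "p \<in> S" for p
    unfolding k_def by (rule initial_seg) (use mpos'[OF that] in simp)
  have Esub: "{1..k p} \<subseteq> A" if pS: "p \<in> S" for p
  proof
    fix n assume n: "n \<in> {1..k p}"
    hence n1: "1 \<le> n" and le: "real_of_int (snd p) * real n \<le> real (Nf p)" using kseg[OF pS] by blast+
    have "M * real n \<le> real_of_int (snd p) * real n" using mpos[OF pS] by (intro mult_right_mono) auto
    hence "M * real n \<le> X" using le Nf[OF pS] by linarith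
    hence "real n \<le> X / M" using M0 by (simp add: field_simps)
    thus "n \<in> A" using n1 A_def by simp
  qed
  have psum_eq: "psum a (lam p) (snd p) (real (Nf p)) = (\<Sum>n\<in>A. a n * x p n)" if pS: "p \<in> S" for p
  proof -
    have "(\<Sum>n\<in>A. a n * x p n) = (\<Sum>n\<in>{1..k p}. a n * x p n)"
      by (rule sum.mono_neutral_right) (use fA Esub[OF pS] in \<open>auto simp: x_def\<close>)
    also have "\<dots> = (\<Sum>n\<in>{1..k p}. a n * e (lam p * real n))"
      by (intro sum.cong refl) (simp add: x_def)
    also have "\<dots> = psum a (lam p) (snd p) (real (Nf p))"
      unfolding psum_def kseg[OF pS] ..
    finally show ?thesis by simp
  qed
  have LHS: "(\<Sum>(l,m)\<in>S. maxpsum a (lam (l,m)) m X) = (\<Sum>p\<in>S. (cmod (\<Sum>n\<in>A. a n * x p n))^2)"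
  proof (intro sum.cong refl)
    fix p assume pS: "p \<in> S"
    obtain l m where p: "p = (l,m)" by (cases p)
    show "(case p of (l, m) \<Rightarrow> maxpsum a (lam (l, m)) m X) = (cmod (\<Sum>n\<in>A. a n * x p n))^2"
      using Nf[OF pS] psum_eq[OF pS] p by simp
  qed
  have Dbd: "real (card {q'\<in>S. dist_nint (lam q - lam q') < \<delta>}) \<le> D" if "q \<in> S" for q
    unfolding D_def using Ddelta_ge[OF fS that] by simp
  have D0: "D \<ge> 0" unfolding D_def by simp
  define B where "B = D * (X / M) + 4 * D / \<delta> * H (card S)"
  have B0: "B \<ge> 0"
  proof -
    have "D * (X / M) \<ge> 0" using D0 XM0 by (rule mult_nonneg_nonneg)
    moreover have "4 * D / \<delta> * H (card S) \<ge> 0"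
      using D0 d H_nonneg[of "card S"] by (intro mult_nonneg_nonneg divide_nonneg_pos) auto
    ultimately show ?thesis unfolding B_def by linarith
  qed
  have Geq: "(\<Sum>n\<in>A. x p n * cnj (x q n)) = (\<Sum>n\<in>{1..min (k p) (k q)}. e ((lam p - lam q) * real n))"
    if pS: "p \<in> S" and qS: "q \<in> S" for p q
  proof -
    have sub: "{1..min (k p) (k q)} \<subseteq> A" using Esub[OF pS] by auto
    have "(\<Sum>n\<in>A. x p n * cnj (x q n)) = (\<Sum>n\<in>{1..min (k p) (k q)}. x p n * cnj (x q n))"
      by (rule sum.mono_neutral_right) (use fA sub in \<open>auto simp: x_def\<close>)
    also have "\<dots> = (\<Sum>n\<in>{1..min (k p) (k q)}. e ((lam p - lam q) * real n))"
    proof (intro sum.cong refl)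
      fix n assume "n \<in> {1..min (k p) (k q)}"
      hence "x p n * cnj (x q n) = e (lam p * real n) * e (- (lam q * real n))"
        by (simp add: x_def e_cnj)
      also have "\<dots> = e ((lam p - lam q) * real n)" by (simp add: e_add[symmetric] algebra_simps)
      finally show "x p n * cnj (x q n) = e ((lam p - lam q) * real n)" .
    qed
    finally show ?thesis .
  qed
  have normx: "cmod (x p n) \<le> 1" for p n by (simp add: x_def)
  have kern: "(\<Sum>q\<in>S. cmod (\<Sum>n\<in>A. x p n * cnj (x q n))) \<le> B" if pS: "p \<in> S" for p
  proof -
    define Nr where "Nr = {q\<in>S. dist_nint (lam p - lam q) < \<delta>}"
    define F where "F = {q\<in>S. dist_nint (lam p - lam q) \<ge> \<delta>}"
    let ?g = "\<lambda>q. cmod (\<Sum>n\<in>A. x p n * cnj (x q n))"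
    have SU: "S = Nr \<union> F" unfolding Nr_def F_def by auto
    have "(\<Sum>q\<in>S. ?g q) = (\<Sum>q\<in>Nr \<union> F. ?g q)" using SU by simp
    also have "\<dots> = (\<Sum>q\<in>Nr. ?g q) + (\<Sum>q\<in>F. ?g q)"
      by (rule sum.union_disjoint) (use fS in \<open>auto simp: Nr_def F_def\<close>)
    finally have split: "(\<Sum>q\<in>S. ?g q) = (\<Sum>q\<in>Nr. ?g q) + (\<Sum>q\<in>F. ?g q)" .
    have gA: "?g q \<le> X / M" for q
    proof -
      have "?g q \<le> (\<Sum>n\<in>A. cmod (x p n * cnj (x q n)))" by (rule norm_sum)
      also have "\<dots> \<le> (\<Sum>n\<in>A. 1)"
      proof (intro sum_mono)
        fix n
        have "cmod (x p n) * cmod (x q n) \<le> 1 * 1" using normx by (intro mult_mono) auto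
        thus "cmod (x p n * cnj (x q n)) \<le> 1" by (simp add: norm_mult)
      qed
      also have "\<dots> = real (card A)" by simp
      finally show ?thesis using cardA by linarith
    qed
    have near: "(\<Sum>q\<in>Nr. ?g q) \<le> D * (X / M)"
    proof -
      have "(\<Sum>q\<in>Nr. ?g q) \<le> (\<Sum>q\<in>Nr. X / M)" by (intro sum_mono gA)
      also have "\<dots> = real (card Nr) * (X / M)" by simp
      also have "\<dots> \<le> D * (X / M)" using Dbd[OF pS] XM0 unfolding Nr_def by (intro mult_right_mono) auto
      finally show ?thesis .
    qed
    have far: "(\<Sum>q\<in>F. ?g q) \<le> 4 * D / \<delta> * H (card S)"
    proof -
      have "(\<Sum>q\<in>F. ?g q) \<le> (\<Sum>q\<in>F. 1 / dist_nint (lam p - lam q))"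
      proof (intro sum_mono)
        fix q assume qF: "q \<in> F"
        hence qS: "q \<in> S" and dq: "dist_nint (lam p - lam q) \<ge> \<delta>" unfolding F_def by auto
        show "?g q \<le> 1 / dist_nint (lam p - lam q)"
          unfolding Geq[OF pS qS] by (rule geom_bound) (use dq d in simp)
      qed
      also have "\<dots> \<le> 4 * D / \<delta> * H (card S)"
        unfolding F_def by (rule far_sum[OF fS d Dbd])
      finally show ?thesis .
    qed
    show ?thesis unfolding split B_def using near far by linarith
  qed
  have sieve: "(\<Sum>p\<in>S. (cmod (\<Sum>n\<in>A. a n * x p n))^2) \<le> B * Q"
    unfolding Q_def by (rule large_sieve_abstract[OF fS fA B0 kern])
  have cS1: "card S \<ge> 1" using False fS by (simp add: Suc_le_eq card_gt_0_iff)
  have T1: "T \<ge> 1" using cS1 cT by linarith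
  define L where "L = ln (2 * T * X)"
  have Hb: "1 + 4 * H (card S) \<le> 56 * L^3"
  proof -
    have "H (card S) \<le> 1 + ln (real (card S))" using cS1 by (rule H_ln)
    also have "\<dots> \<le> 1 + ln T" using cS1 cT by simp
    finally have "1 + 4 * H (card S) \<le> 1 + 4 * (1 + ln T)" by simp
    also have "\<dots> \<le> 56 * L^3" unfolding L_def by (rule log_bound[OF X T1])
    finally show ?thesis .
  qed
  have Bb: "B \<le> D * (56 * L^3) * (X / M + 1 / \<delta>)"
  proof -
    define y where "y = X / M"
    define z where "z = 1 / \<delta>"
    define h where "h = H (card S)"
    have y0: "y \<ge> 0" and z0: "z \<ge> 0" and h0: "h \<ge> 0" using XM0 d H_nonneg unfolding y_def z_def h_def by auto
    have hy: "h * y \<ge> 0" using h0 y0 by simp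
    have "B = D * (y + 4 * h * z)" unfolding B_def y_def z_def h_def by (simp add: algebra_simps)
    also have "\<dots> \<le> D * ((1 + 4 * h) * (y + z))"
    proof (rule mult_left_mono[OF _ D0])
      show "y + 4 * h * z \<le> (1 + 4 * h) * (y + z)" using z0 hy by (simp add: algebra_simps)
    qed
    also have "\<dots> \<le> D * ((56 * L^3) * (y + z))"
      using Hb y0 z0 D0 unfolding h_def by (intro mult_left_mono mult_right_mono) auto
    finally show ?thesis unfolding y_def z_def by (simp add: mult_ac)
  qed
  have Q0: "Q \<ge> 0" unfolding Q_def by (simp add: sum_nonneg)
  have "(\<Sum>(l,m)\<in>S. maxpsum a (lam (l,m)) m X) \<le> B * Q" using LHS sieve by simp
  also have "\<dots> \<le> D * (56 * L^3) * (X / M + 1 / \<delta>) * Q" using Bb Q0 by (rule mult_right_mono)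
  finally show ?thesis unfolding D_def L_def Q_def A_def by (simp add: mult_ac)
qed

theorem lemma9:
  "\<exists>C>0. \<forall>(X::real) (M::real) (\<delta>::real) (T::real) (S::(int \<times> int) set)
          (lam::int \<times> int \<Rightarrow> real) (a::nat \<Rightarrow> complex).
     X \<ge> 1 \<longrightarrow> M \<ge> 1 \<longrightarrow> \<delta> > 0 \<longrightarrow> finite S \<longrightarrow> real (card S) \<le> T \<longrightarrow>
     (\<forall>(l,m)\<in>S. M \<le> real_of_int m \<and> real_of_int m < 2 * M) \<longrightarrow>
     (\<Sum>(l,m)\<in>S. maxpsum a (lam (l,m)) m X)
       \<le> C * real (Ddelta S lam \<delta>) * (ln (2 * T * X))^3 * (X / M + 1 / \<delta>)
           * (\<Sum>n\<in>{n::nat. 1 \<le> n \<and> real n \<le> X / M}. (cmod (a n))^2)"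
  apply (rule exI[of _ 56])
  apply (intro conjI allI impI)
   apply simp
  apply (rule main_bound)
       apply assumption+
  done


end
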